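(* Let $Y$ be a CFG-space over a Boolean algebra $B$ and let $y_0,\dots,y_n\in Y$ be such that every element of $Y$ is a convex combination of $y_0,\dots,y_n$ and $d(y_i,y_j)=1$ for all $i\ne j$. Let $f:Y\to B$ be a contractive map (where $B$ carries the metric $d(a,b)=a\triangle b$) such that $f(y_i)\vee f(y_j)=1$ for all $i\ne j$. Then the equation $f(x)=0$ has at most one solution $x\in Y$.
   Context: A Boolean metric space over $B$ is a set with symmetric $d$ into $B$, $d(x,y)=0$ iff $x=y$, $d(x,z)\le d(x,y)\vee d(y,z)$. A map $f$ is contractive if $d(f(x),f(y))\le d(x,y)$. A partition of $B$ is a finite family of pairwise disjoint elements with supremum $1$; $x$ is a convex combination of $x_0,\dots,x_n$ with coefficients a partition $a_0,\dots,a_n$ if $a_i\wedge d(x,x_i)=0$ for all $i$. A CFG-space is a Boolean metric space that is convex (every such convex combination of its points exists in it) and finitely generated (some finite subset $S$ has every point as a convex combination of points of $S$). $\triangle$ is symmetric difference. *)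

theory Defs
  imports Main
begin

definition symdiff :: "'b::boolean_algebra \<Rightarrow> 'b \<Rightarrow> 'b" where
  "symdiff a b = sup (a - b) (b - a)"

definition bool_metric :: "'a set \<Rightarrow> ('a \<Rightarrow> 'a \<Rightarrow> 'b::boolean_algebra) \<Rightarrow> bool" where
  "bool_metric Y d \<longleftrightarrow>
     (\<forall>x\<in>Y. \<forall>y\<in>Y. d x y = d y x) \<and>
     (\<forall>x\<in>Y. \<forall>y\<in>Y. d x y = bot \<longleftrightarrow> x = y) \<and>
     (\<forall>x\<in>Y. \<forall>y\<in>Y. \<forall>z\<in>Y. d x z \<le> sup (d x y) (d y z))"

fun joinn :: "(nat \<Rightarrow> 'b::boolean_algebra) \<Rightarrow> nat \<Rightarrow> 'b" where
  "joinn a 0 = a 0"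
| "joinn a (Suc n) = sup (joinn a n) (a (Suc n))"

definition partition :: "nat \<Rightarrow> (nat \<Rightarrow> 'b::boolean_algebra) \<Rightarrow> bool" where
  "partition n a \<longleftrightarrow>
     (\<forall>i\<le>n. \<forall>j\<le>n. i \<noteq> j \<longrightarrow> inf (a i) (a j) = bot) \<and> joinn a n = top"

definition convex_comb ::
  "('a \<Rightarrow> 'a \<Rightarrow> 'b::boolean_algebra) \<Rightarrow> 'a \<Rightarrow> nat \<Rightarrow> (nat \<Rightarrow> 'a) \<Rightarrow> (nat \<Rightarrow> 'b) \<Rightarrow> bool" where
  "convex_comb d x n xs a \<longleftrightarrow> partition n a \<and> (\<forall>i\<le>n. inf (a i) (d x (xs i)) = bot)"

definition bm_convex :: "'a set \<Rightarrow> ('a \<Rightarrow> 'a \<Rightarrow> 'b::boolean_algebra) \<Rightarrow> bool" where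
  "bm_convex Y d \<longleftrightarrow>
     (\<forall>n xs a. (\<forall>i\<le>n. xs i \<in> Y) \<and> partition n a \<longrightarrow> (\<exists>x\<in>Y. convex_comb d x n xs a))"

definition bm_fin_gen :: "'a set \<Rightarrow> ('a \<Rightarrow> 'a \<Rightarrow> 'b::boolean_algebra) \<Rightarrow> bool" where
  "bm_fin_gen Y d \<longleftrightarrow>
     (\<exists>S. finite S \<and> S \<subseteq> Y \<and>
        (\<forall>x\<in>Y. \<exists>n xs a. (\<forall>i\<le>n. xs i \<in> S) \<and> convex_comb d x n xs a))"

definition CFG_space :: "'a set \<Rightarrow> ('a \<Rightarrow> 'a \<Rightarrow> 'b::boolean_algebra) \<Rightarrow> bool" where
  "CFG_space Y d \<longleftrightarrow> bool_metric Y d \<and> bm_convex Y d \<and> bm_fin_gen Y d"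

definition contractive_to_B :: "'a set \<Rightarrow> ('a \<Rightarrow> 'a \<Rightarrow> 'b::boolean_algebra) \<Rightarrow> ('a \<Rightarrow> 'b) \<Rightarrow> bool" where
  "contractive_to_B Y d f \<longleftrightarrow> (\<forall>x\<in>Y. \<forall>y\<in>Y. symdiff (f x) (f y) \<le> d x y)"

end

theory Submission
  imports Defs
begin

lemma joinn_bot:
  fixes c :: "'b::boolean_algebra"
  assumes "\<forall>i\<le>n. inf c (a i) = bot"
  shows "inf c (joinn a n) = bot"
  using assms
proof (induction n)
  case 0 then show ?case by simp
next
  case (Suc n)
  then show ?case by (simp add: inf_sup_distrib1)
qed

lemma symdiff_bot: "symdiff bot (z::'b::boolean_algebra) = z"
  by (simp add: symdiff_def diff_eq)

theorem lemma3p3: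
  fixes Y :: "'a set" and d :: "'a \<Rightarrow> 'a \<Rightarrow> 'b::boolean_algebra"
    and n :: nat and y :: "nat \<Rightarrow> 'a" and f :: "'a \<Rightarrow> 'b"
  assumes "CFG_space Y d"
    and "\<forall>i\<le>n. y i \<in> Y"
    and "\<forall>x\<in>Y. \<exists>a. convex_comb d x n y a"
    and "\<forall>i\<le>n. \<forall>j\<le>n. i \<noteq> j \<longrightarrow> d (y i) (y j) = top"
    and "contractive_to_B Y d f"
    and "\<forall>i\<le>n. \<forall>j\<le>n. i \<noteq> j \<longrightarrow> sup (f (y i)) (f (y j)) = top"
  shows "\<forall>x\<in>Y. \<forall>x'\<in>Y. f x = bot \<and> f x' = bot \<longrightarrow> x = x'"
proof (intro ballI impI)
  fix x x' assume x: "x \<in> Y" and x': "x' \<in> Y" and fz: "f x = bot \<and> f x' = bot"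
  have bm: "bool_metric Y d" using assms(1) by (simp add: CFG_space_def)
  obtain a where a: "convex_comb d x n y a" using assms(3) x by blast
  obtain b where b: "convex_comb d x' n y b" using assms(3) x' by blast
  have le: "a i \<le> - f (y i)" if "convex_comb d z n y a" "z \<in> Y" "f z = bot" "i \<le> n"
    for a z i
  proof -
    have "symdiff (f z) (f (y i)) \<le> d z (y i)"
      using assms(5) assms(2) that unfolding contractive_to_B_def by blast
    hence "f (y i) \<le> d z (y i)" using that(3) by (simp add: symdiff_bot)
    moreover have "inf (a i) (d z (y i)) = bot" using that by (simp add: convex_comb_def)
    ultimately have "inf (a i) (f (y i)) \<le> inf (a i) (d z (y i))"
      by (meson inf_mono order_refl)
    hence "inf (a i) (f (y i)) = bot" using \<open>inf (a i) (d z (y i)) = bot\<close>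
      by (simp add: bot_unique)
    thus ?thesis by (simp add: inf_shunt)
  qed
  have ai: "a i \<le> - f (y i)" if "i \<le> n" for i using le[OF a x] fz that by blast
  have bi: "b i \<le> - f (y i)" if "i \<le> n" for i using le[OF b x'] fz that by blast
  define c where "c = d x x'"
  have cell: "inf c (inf (a i) (b j)) = bot" if "i \<le> n" "j \<le> n" for i j
  proof (cases "i = j")
    case False
    have t: "sup (f (y i)) (f (y j)) = top" using assms(6) that False by blast
    have "inf (- f (y i)) (- f (y j)) = - sup (f (y i)) (f (y j))" by simp
    also have "\<dots> = bot" using t by simp
    finally have z: "inf (- f (y i)) (- f (y j)) = bot" .
    have "inf (a i) (b j) \<le> inf (- f (y i)) (- f (y j))"
      using ai[OF that(1)] bi[OF that(2)] by (rule inf_mono)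
    hence "inf (a i) (b j) = bot" using z by (simp add: bot_unique)
    thus ?thesis by simp
  next
    case True
    have yi: "y i \<in> Y" using assms(2) that by simp
    have "c \<le> sup (d x (y i)) (d (y i) x')"
      using bm x x' yi unfolding bool_metric_def c_def by blast
    also have "d (y i) x' = d x' (y i)" using bm x' yi unfolding bool_metric_def by blast
    finally have cle: "c \<le> sup (d x (y i)) (d x' (y i))" .
    have e1: "inf (a i) (d x (y i)) = bot" using a that by (simp add: convex_comb_def)
    have e2: "inf (b i) (d x' (y i)) = bot" using b that by (simp add: convex_comb_def)
    have "inf c (inf (a i) (b i)) \<le> inf (sup (d x (y i)) (d x' (y i))) (inf (a i) (b i))"
      using cle order_refl by (rule inf_mono)
    also have "\<dots> = sup (inf (inf (a i) (d x (y i))) (b i)) (inf (inf (b i) (d x' (y i))) (a i))"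
      by (simp only: inf_sup_distrib1 inf_sup_distrib2 inf_aci)
    also have "\<dots> = bot" using e1 e2 by simp
    finally show ?thesis using True by (simp add: bot_unique)
  qed
  have step: "inf (inf c (joinn b n)) (a i) = bot" if "i \<le> n" for i
  proof -
    have "inf (inf c (a i)) (joinn b n) = bot"
    proof (rule joinn_bot, intro allI impI)
      fix j assume "j \<le> n"
      then have "inf c (inf (a i) (b j)) = bot" using cell that by blast
      thus "inf (inf c (a i)) (b j) = bot" by (simp add: inf_assoc)
    qed
    thus ?thesis by (metis inf_assoc inf_commute)
  qed
  have "inf (inf c (joinn b n)) (joinn a n) = bot" by (rule joinn_bot) (use step in simp)
  moreover have "joinn a n = top" "joinn b n = top"
    using a b by (simp_all add: convex_comb_def partition_def)
  ultimately have "c = bot" by simp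
  thus "x = x'" using bm x x' unfolding bool_metric_def c_def by blast
qed

end
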